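(* Fix $r\ge1$. For $n\ge0$ let $$P^{(r)}_n(z_1,\dots,z_r)=\sum_{\pi} z_1^{a_1(\pi)}z_2^{a_2(\pi)}\cdots z_r^{a_r(\pi)},$$ the sum over all multiset set-partitions $\pi$ of the multiset $\{1^r,2^r,\dots,n^r\}$ (each of $1,\dots,n$ appearing exactly $r$ times); in particular $P^{(r)}_0=1$. Then for all $n\ge1$, $$P^{(r)}_n(z_1,\dots,z_r)=\mathcal{D}_r\,P^{(r)}_{n-1}(z_1,\dots,z_r),$$ where $\mathcal{D}_r$ is the operator defined in the context. Consequently the number of multiset set-partitions of $\{1^r,\dots,n^r\}$ equals $P^{(r)}_n(1,1,\dots,1)$.
   Context: A multiset set-partition of a finite multiset $M$ is a finite multiset of nonempty sets (ordinary sets, no repeated elements inside a set) whose multiset union equals $M$; the same set may occur several times in the partition, and the partition is unordered. For a multiset set-partition $\pi$ and $i\ge1$, $a_i(\pi)$ denotes the number of distinct sets that occur in $\pi$ exactly $i$ times. Definition of $\mathcal{D}_r$: Put $z_0:=1$ and $D_i:=\partial/\partial z_i$. A scenario is a tuple $T=[c_0,\lambda_1,\dots,\lambda_r]$ where $c_0\ge0$ is an integer and, for each $i$, $\lambda_i$ is an integer partition (possibly empty) all of whose parts are at most $i$, such that $c_0+|\lambda_1|+\cdots+|\lambda_r|=r$ ($|\lambda|$ = sum of parts). Write $m_j(\lambda_i)$ for the number of parts of $\lambda_i$ equal to $j$ and $\ell(\lambda_i)=\sum_j m_j(\lambda_i)$ for its number of parts. To $T$ associate the operator $$\mathcal{P}[T]\,f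 = z_{c_0}\prod_{i=1}^{r}\prod_{j=1}^{i}\frac{(z_j z_{i-j})^{m_j(\lambda_i)}}{m_j(\lambda_i)!}\;\cdot\;\Big(\prod_{i=1}^{r}D_i^{\ell(\lambda_i)}\Big)f ,$$ i.e. all differentiations are applied first and the result is then multiplied by the monomial coefficient (normal ordering). Then $\mathcal{D}_r:=\sum_{T}\mathcal{P}[T]$, the sum over all scenarios $T$. (For example $\mathcal{D}_1 = z_1 + z_1 D_1$, and $\mathcal{D}_2= z_2D_2+\tfrac12 z_1^4D_2^2+z_1^3D_1D_2+\tfrac12 z_1^2D_1^2+z_1^3D_2+z_1^2D_1+z_2$.) *)

theory Defs
  imports "HOL-Analysis.Analysis" "HOL-Library.Multiset"
begin

definition rep_mset :: "nat \<Rightarrow> nat \<Rightarrow> nat multiset" where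
  "rep_mset r n = (\<Sum>k\<in>{1..n}. replicate_mset r k)"

definition msp :: "nat multiset \<Rightarrow> nat set multiset set" where
  "msp M = {\<pi>. (\<forall>S\<in>#\<pi>. S \<noteq> {} \<and> finite S) \<and> (\<Sum>S\<in>#\<pi>. mset_set S) = M}"

definition a_cnt :: "nat \<Rightarrow> nat set multiset \<Rightarrow> nat" where
  "a_cnt i \<pi> = card {S \<in> set_mset \<pi>. count \<pi> S = i}"

definition P :: "nat \<Rightarrow> nat \<Rightarrow> (nat \<Rightarrow> real) \<Rightarrow> real" where
  "P r n z = (\<Sum>\<pi>\<in>msp (rep_mset r n). \<Prod>i\<in>{1..r}. z i ^ a_cnt i \<pi>)"

definition pd :: "nat \<Rightarrow> ((nat \<Rightarrow> real) \<Rightarrow> real) \<Rightarrow> (nat \<Rightarrow> real) \<Rightarrow> real" where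
  "pd i f z = deriv (\<lambda>t. f (z(i := t))) (z i)"

text \<open>Scenarios T = [c0, lambda_1, ..., lambda_r]; partitions lambda_i are multisets of
  positive parts at most i; lambda_i is empty for i outside 1..r.\<close>
definition scenarios :: "nat \<Rightarrow> (nat \<times> (nat \<Rightarrow> nat multiset)) set" where
  "scenarios r = {(c, l). (\<forall>i. set_mset (l i) \<subseteq> {1..i}) \<and> (\<forall>i. i \<notin> {1..r} \<longrightarrow> l i = {#})
                         \<and> c + (\<Sum>i=1..r. sum_mset (l i)) = r}"

definition Dall :: "nat \<Rightarrow> (nat \<Rightarrow> nat multiset) \<Rightarrow> ((nat \<Rightarrow> real) \<Rightarrow> real) \<Rightarrow> (nat \<Rightarrow> real) \<Rightarrow> real" where
  "Dall r l f = foldr (\<lambda>i g. (pd i ^^ size (l i)) g) [1..<r+1] f"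

text \<open>The operator P[T] (normal ordered), with z_0 := 1.\<close>
definition PT :: "nat \<Rightarrow> nat \<times> (nat \<Rightarrow> nat multiset) \<Rightarrow> ((nat \<Rightarrow> real) \<Rightarrow> real) \<Rightarrow> (nat \<Rightarrow> real) \<Rightarrow> real" where
  "PT r T f z = (let c = fst T; l = snd T; zz = z(0 := 1) in
     zz c * (\<Prod>i\<in>{1..r}. \<Prod>j\<in>{1..i}.
        (zz j * zz (i - j)) ^ count (l i) j / fact (count (l i) j))
     * Dall r l f z)"

definition Dop :: "nat \<Rightarrow> ((nat \<Rightarrow> real) \<Rightarrow> real) \<Rightarrow> (nat \<Rightarrow> real) \<Rightarrow> real" where
  "Dop r f z = (\<Sum>T\<in>scenarios r. PT r T f z)"

end

theory Submission
  imports Defs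
begin


definition msum :: "'x set \<Rightarrow> ('x \<Rightarrow> real) \<Rightarrow> ('x \<Rightarrow> nat \<Rightarrow> nat) \<Rightarrow> nat set \<Rightarrow> (nat \<Rightarrow> real) \<Rightarrow> real" where
  "msum A w e K z = (\<Sum>x\<in>A. w x * (\<Prod>k\<in>K. z k ^ e x k))"

definition ff :: "nat \<Rightarrow> nat \<Rightarrow> real" where
  "ff a m = (\<Prod>t<m. real (a - t))"

lemma pd_msum:
  assumes "finite K" "i \<in> K"
  shows "pd i (msum A w e K) = msum A (\<lambda>x. w x * real (e x i)) (\<lambda>x. (e x)(i := e x i - 1)) K"
proof (rule ext)
  fix z :: "nat \<Rightarrow> real"
  have split: "\<And>u :: nat \<Rightarrow> nat. (\<Prod>k\<in>K. (z(i:=t)) k ^ u k) = t ^ u i * (\<Prod>k\<in>K-{i}. z k ^ u k)" for t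
    using assms by (simp add: prod.remove)
  have D: "((\<lambda>t. msum A w e K (z(i := t))) has_field_derivative
      (\<Sum>x\<in>A. w x * (real (e x i) * z i ^ (e x i - 1)) * (\<Prod>k\<in>K-{i}. z k ^ e x k))) (at (z i))"
    unfolding msum_def split
    by (auto intro!: derivative_eq_intros sum.cong simp: mult_ac)
  have "pd i (msum A w e K) z = (\<Sum>x\<in>A. w x * (real (e x i) * z i ^ (e x i - 1)) * (\<Prod>k\<in>K-{i}. z k ^ e x k))"
    unfolding pd_def using DERIV_imp_deriv[OF D] by simp
  also have "\<dots> = msum A (\<lambda>x. w x * real (e x i)) (\<lambda>x. (e x)(i := e x i - 1)) K z"
    unfolding msum_def
  proof (rule sum.cong[OF refl])
    fix x assume "x \<in> A"
    have "(\<Prod>k\<in>K. z k ^ ((e x)(i := e x i - 1)) k) = z i ^ (e x i - 1) * (\<Prod>k\<in>K-{i}. z k ^ e x k)"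
      using assms by (simp add: prod.remove)
    then show "w x * (real (e x i) * z i ^ (e x i - 1)) * (\<Prod>k\<in>K-{i}. z k ^ e x k) =
      w x * real (e x i) * (\<Prod>k\<in>K. z k ^ ((e x)(i := e x i - 1)) k)" by simp
  qed
  finally show "pd i (msum A w e K) z = msum A (\<lambda>x. w x * real (e x i)) (\<lambda>x. (e x)(i := e x i - 1)) K z" .
qed

lemma pd_pow_msum:
  assumes "finite K" "i \<in> K"
  shows "(pd i ^^ m) (msum A w e K) = msum A (\<lambda>x. w x * ff (e x i) m) (\<lambda>x. (e x)(i := e x i - m)) K"
proof (induction m)
  case 0
  then show ?case by (simp add: ff_def)
next
  case (Suc m)
  have "(pd i ^^ Suc m) (msum A w e K) = pd i ((pd i ^^ m) (msum A w e K))" by simp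
  also have "\<dots> = msum A (\<lambda>x. (w x * ff (e x i) m) * real (((e x)(i := e x i - m)) i)) (\<lambda>x. ((e x)(i := e x i - m))(i := ((e x)(i := e x i - m)) i - 1)) K"
    unfolding Suc.IH by (rule pd_msum[OF assms])
  also have "\<dots> = msum A (\<lambda>x. w x * ff (e x i) (Suc m)) (\<lambda>x. (e x)(i := e x i - Suc m)) K"
    by (simp add: ff_def mult.assoc)
  finally show ?case .
qed

lemma foldr_msum:
  assumes "finite K" "distinct is" "set is \<subseteq> K"
  shows "foldr (\<lambda>i g. (pd i ^^ s i) g) is (msum A w e K) =
     msum A (\<lambda>x. w x * (\<Prod>i\<in>set is. ff (e x i) (s i))) (\<lambda>x k. e x k - (if k \<in> set is then s k else 0)) K"
  using assms(2,3)
proof (induction "is")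
  case Nil
  have "(\<lambda>x k. e x k - (if k \<in> set [] then s k else 0)) = e" by simp
  then show ?case by simp
next
  case (Cons i "is")
  then have IH: "foldr (\<lambda>i g. (pd i ^^ s i) g) is (msum A w e K) =
     msum A (\<lambda>x. w x * (\<Prod>i\<in>set is. ff (e x i) (s i))) (\<lambda>x k. e x k - (if k \<in> set is then s k else 0)) K"
    and iK: "i \<in> K" and inot: "i \<notin> set is" by auto
  have "foldr (\<lambda>i g. (pd i ^^ s i) g) (i # is) (msum A w e K) =
    (pd i ^^ s i) (msum A (\<lambda>x. w x * (\<Prod>i\<in>set is. ff (e x i) (s i))) (\<lambda>x k. e x k - (if k \<in> set is then s k else 0)) K)"
    using IH by simp
  also have "\<dots> = msum A (\<lambda>x. (w x * (\<Prod>i\<in>set is. ff (e x i) (s i))) * ff ((\<lambda>k. e x k - (if k \<in> set is then s k else 0)) i) (s i))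
      (\<lambda>x. (\<lambda>k. e x k - (if k \<in> set is then s k else 0))(i := (\<lambda>k. e x k - (if k \<in> set is then s k else 0)) i - s i)) K"
    by (rule pd_pow_msum[OF assms(1) iK])
  also have "\<dots> = msum A (\<lambda>x. w x * (\<Prod>i\<in>set (i#is). ff (e x i) (s i))) (\<lambda>x k. e x k - (if k \<in> set (i#is) then s k else 0)) K"
    using inot by (intro arg_cong2[where f="\<lambda>a b. msum A a b K"]) (auto simp: fun_eq_iff mult_ac)
  finally show ?case .
qed

lemma ff_Suc_Suc: "ff (Suc a) (Suc s) = ff a (Suc s) + real (Suc s) * ff a s"
proof -
  have 1: "ff (Suc a) (Suc s) = real (Suc a) * ff a s"
    unfolding ff_def by (simp add: prod.lessThan_Suc_shift del: prod.lessThan_Suc)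
  have 2: "ff a (Suc s) = ff a s * real (a - s)" unfolding ff_def by simp
  show ?thesis
  proof (cases "s \<le> a")
    case True then show ?thesis unfolding 1 2 by (simp add: algebra_simps of_nat_diff)
  next
    case False
    then have "ff a s = 0" unfolding ff_def by (intro prod_zero) (auto intro!: bexI[of _ a])
    then show ?thesis unfolding 1 2 by simp
  qed
qed



lemma P_msum: "P r m = msum (msp (rep_mset r m)) (\<lambda>_. 1) (\<lambda>\<pi> k. a_cnt k \<pi>) {1..r}"
  unfolding P_def msum_def by (simp add: fun_eq_iff)

lemma Dall_P: "Dall r l (P r m) z = (\<Sum>\<pi>\<in>msp (rep_mset r m).
   (\<Prod>i\<in>{1..r}. ff (a_cnt i \<pi>) (size (l i))) * (\<Prod>k\<in>{1..r}. z k ^ (a_cnt k \<pi> - size (l k))))"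
proof -
  have st: "set [1..<r+1] = {1..r}" by auto
  have "foldr (\<lambda>i g. (pd i ^^ size (l i)) g) [1..<r+1] (msum (msp (rep_mset r m)) (\<lambda>_. 1) (\<lambda>\<pi> k. a_cnt k \<pi>) {1..r}) =
     msum (msp (rep_mset r m)) (\<lambda>x. 1 * (\<Prod>i\<in>set [1..<r+1]. ff (a_cnt i x) (size (l i)))) (\<lambda>x k. a_cnt k x - (if k \<in> set [1..<r+1] then size (l k) else 0)) {1..r}"
    by (rule foldr_msum) auto
  then show ?thesis
    unfolding Dall_def P_msum st
    unfolding msum_def by (auto intro!: sum.cong prod.cong)
qed

lemma count_rep: "count (rep_mset r m) x = (if 1 \<le> x \<and> x \<le> m then r else 0)"
  unfolding rep_mset_def count_sum by (simp add: count_replicate_mset)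

lemma set_rep: "r \<ge> 1 \<Longrightarrow> set_mset (rep_mset r m) = {1..m}"
  by (auto simp: count_rep set_mset_def)

lemma rep_mset_Suc: "rep_mset r (Suc m) = rep_mset r m + replicate_mset r (Suc m)"
  unfolding rep_mset_def by (simp add: add.commute)

lemma finite_msets_bounded:
  assumes "finite A" shows "finite {M. set_mset M \<subseteq> A \<and> size M \<le> k}"
proof -
  have "{M. set_mset M \<subseteq> A \<and> size M \<le> k} \<subseteq> mset ` {xs. set xs \<subseteq> A \<and> length xs \<le> k}"
  proof
    fix M assume "M \<in> {M. set_mset M \<subseteq> A \<and> size M \<le> k}"
    moreover obtain xs where "mset xs = M" using ex_mset by blast
    ultimately show "M \<in> mset ` {xs. set xs \<subseteq> A \<and> length xs \<le> k}" by auto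
  qed
  then show ?thesis using finite_lists_length_le[OF assms] finite_subset by blast
qed

lemma size_le_Union:
  "(\<forall>S\<in>#\<pi>. S \<noteq> {} \<and> finite S) \<Longrightarrow> size \<pi> \<le> size (\<Sum>S\<in>#\<pi>. mset_set S)"
proof (induction \<pi>)
  case empty then show ?case by simp
next
  case (add S \<pi>)
  then have "card S \<ge> 1" by (simp add: Suc_leI card_gt_0_iff)
  with add show ?case by simp
qed

lemma msp_subset: "\<pi> \<in> msp M \<Longrightarrow> S \<in># \<pi> \<Longrightarrow> S \<subseteq> set_mset M"
proof -
  assume a: "\<pi> \<in> msp M" "S \<in># \<pi>"
  then obtain \<rho> where r: "\<pi> = add_mset S \<rho>" by (metis multi_member_split)
  have fin: "finite S" using a unfolding msp_def by auto
  have "M = mset_set S + (\<Sum>X\<in>#\<rho>. mset_set X)" using a(1) unfolding msp_def r by simp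
  then show "S \<subseteq> set_mset M" using fin by auto
qed

lemma finite_msp: "finite (msp M)"
proof -
  have "msp M \<subseteq> {\<pi>. set_mset \<pi> \<subseteq> Pow (set_mset M) \<and> size \<pi> \<le> size M}"
  proof
    fix \<pi> assume a: "\<pi> \<in> msp M"
    then have "size \<pi> \<le> size M" using size_le_Union unfolding msp_def by auto
    then show "\<pi> \<in> {\<pi>. set_mset \<pi> \<subseteq> Pow (set_mset M) \<and> size \<pi> \<le> size M}"
      using msp_subset[OF a] by auto
  qed
  then show ?thesis using finite_msets_bounded[of "Pow (set_mset M)"] finite_subset by blast
qed

lemma sum_mset_ge_count:
  fixes f :: "'a \<Rightarrow> nat"
  shows "count \<pi> S * f S \<le> (\<Sum>X\<in>#\<pi>. f X)"
proof -
  have "\<pi> = filter_mset (\<lambda>y. y = S) \<pi> + filter_mset (\<lambda>y. \<not> y = S) \<pi>" by (rule multiset_partition)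
  then have "(\<Sum>X\<in>#\<pi>. f X) = (\<Sum>X\<in>#filter_mset (\<lambda>y. y = S) \<pi>. f X) + (\<Sum>X\<in>#filter_mset (\<lambda>y. \<not> y = S) \<pi>. f X)"
    by (metis image_mset_union sum_mset.union)
  also have "(\<Sum>X\<in>#filter_mset (\<lambda>y. y = S) \<pi>. f X) = count \<pi> S * f S"
    unfolding filter_eq_replicate_mset by simp
  finally show ?thesis by simp
qed

lemma count_sum_mset': "count (\<Sum>X\<in>#\<pi>. f X) x = (\<Sum>X\<in>#\<pi>. count (f X) x)"
  by (induction \<pi>) auto

lemma count_le_r:
  assumes "\<pi> \<in> msp (rep_mset r m)" "S \<in># \<pi>"
  shows "count \<pi> S \<le> r"
proof -
  have ne: "S \<noteq> {}" "finite S" using assms unfolding msp_def by auto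
  then obtain x where x: "x \<in> S" by auto
  have "count \<pi> S * count (mset_set S) x \<le> (\<Sum>X\<in>#\<pi>. count (mset_set X) x)"
    by (rule sum_mset_ge_count)
  also have "\<dots> = count (\<Sum>X\<in>#\<pi>. mset_set X) x" by (simp add: count_sum_mset')
  also have "\<dots> = count (rep_mset r m) x" using assms(1) unfolding msp_def by simp
  also have "\<dots> \<le> r" by (simp add: count_rep)
  finally show ?thesis using x ne by simp
qed



definition H :: "'a set \<Rightarrow> nat multiset \<Rightarrow> ('a \<Rightarrow> nat) set" where
  "H D L = {h \<in> PiE D (\<lambda>_. insert 0 (set_mset L)). filter_mset (\<lambda>j. j \<noteq> 0) (image_mset h (mset_set D)) = L}"

lemma finite_H: "finite D \<Longrightarrow> finite (H D L)"
  unfolding H_def by (rule finite_subset[of _ "PiE D (\<lambda>_. insert 0 (set_mset L))"]) (auto intro: finite_PiE)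

lemma card_by_fibres:
  assumes "finite A" "finite V" "f ` A \<subseteq> V"
  shows "card A = (\<Sum>v\<in>V. card {a\<in>A. f a = v})"
  using sum.group[OF assms, of "\<lambda>_. 1::nat"] by simp

lemma H_fibre:
  assumes D: "finite D" "x \<notin> D" and v: "v \<in> insert 0 (set_mset L)" and L0: "0 \<notin># L"
  shows "{h \<in> H (insert x D) L. h x = v} = (\<lambda>h. h(x := v)) ` H D (if v = 0 then L else L - {#v#})"
    (is "?A = ?f ` ?B")
proof
  show "?A \<subseteq> ?f ` ?B"
  proof
    fix h assume "h \<in> ?A"
    then have hP: "h \<in> PiE (insert x D) (\<lambda>_. insert 0 (set_mset L))" and hx: "h x = v"
      and hF: "filter_mset (\<lambda>j. j \<noteq> 0) (image_mset h (mset_set (insert x D))) = L"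
      unfolding H_def by auto
    define h0 where "h0 = restrict h D"
    have im: "image_mset h0 (mset_set D) = image_mset h (mset_set D)"
      unfolding h0_def by (rule image_mset_cong) (use D in auto)
    have F: "filter_mset (\<lambda>j. j \<noteq> 0) (image_mset h (mset_set D)) = (if v = 0 then L else L - {#v#})"
      using hF D hx by (auto simp: mset_set.insert)
    have "h0 \<in> ?B"
      unfolding H_def
    proof (intro CollectI conjI)
      show "h0 \<in> PiE D (\<lambda>_. insert 0 (set_mset (if v = 0 then L else L - {#v#})))"
      proof (rule PiE_I)
        fix y assume y: "y \<in> D"
        show "h0 y \<in> insert 0 (set_mset (if v = 0 then L else L - {#v#}))"
        proof (cases "h y = 0")
          case False
          then have "h y \<in># filter_mset (\<lambda>j. j \<noteq> 0) (image_mset h (mset_set D))"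
            using y D by auto
          then show ?thesis unfolding F using y h0_def by auto
        qed (use y h0_def in auto)
      qed (simp add: h0_def)
      show "filter_mset (\<lambda>j. j \<noteq> 0) (image_mset h0 (mset_set D)) = (if v = 0 then L else L - {#v#})"
        using F im by simp
    qed
    moreover have "h = h0(x := v)"
    proof
      fix y show "h y = (h0(x := v)) y"
        using hP hx D unfolding h0_def by (cases "y = x"; cases "y \<in> D") (auto simp: PiE_iff extensional_def)
    qed
    ultimately show "h \<in> ?f ` ?B" by blast
  qed
next
  show "?f ` ?B \<subseteq> ?A"
  proof
    fix h' assume "h' \<in> ?f ` ?B"
    then obtain h where h: "h \<in> ?B" and h': "h' = h(x := v)" by blast
    then have hP: "h \<in> PiE D (\<lambda>_. insert 0 (set_mset (if v = 0 then L else L - {#v#})))"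
      and hF: "filter_mset (\<lambda>j. j \<noteq> 0) (image_mset h (mset_set D)) = (if v = 0 then L else L - {#v#})"
      unfolding H_def by auto
    have im: "image_mset h' (mset_set D) = image_mset h (mset_set D)"
      unfolding h' by (rule image_mset_cong) (use D in auto)
    have "h' \<in> PiE (insert x D) (\<lambda>_. insert 0 (set_mset L))"
    proof (rule PiE_I)
      fix y assume "y \<in> insert x D"
      then show "h' y \<in> insert 0 (set_mset L)"
      proof
        assume "y = x" then show ?thesis using v h' by simp
      next
        assume y: "y \<in> D"
        then have "h y \<in> insert 0 (set_mset (if v = 0 then L else L - {#v#}))" using hP by auto
        then show ?thesis using y D h' by (auto split: if_splits dest: in_diffD)
      qed
    next
      fix y assume "y \<notin> insert x D" then show "h' y = undefined" using hP h' by auto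
    qed
    moreover have "filter_mset (\<lambda>j. j \<noteq> 0) (image_mset h' (mset_set (insert x D))) = L"
      using D hF im h' v by (auto simp: mset_set.insert)
    moreover have "h' x = v" using h' by simp
    ultimately show "h' \<in> ?A" unfolding H_def by auto
  qed
qed

lemma inj_upd: "x \<notin> D \<Longrightarrow> inj_on (\<lambda>h. h(x := v)) (PiE D S)"
  by (rule inj_onI) (metis PiE_E fun_upd_idem_iff fun_upd_upd)

lemma card_H_fibre:
  assumes D: "finite D" "x \<notin> D" and v: "v \<in> insert 0 (set_mset L)" and L0: "0 \<notin># L"
  shows "card {h \<in> H (insert x D) L. h x = v} = card (H D (if v = 0 then L else L - {#v#}))"
proof -
  have "inj_on (\<lambda>h. h(x := v)) (H D (if v = 0 then L else L - {#v#}))"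
    by (rule inj_on_subset[OF inj_upd[OF D(2)]]) (auto simp: H_def)
  then show ?thesis unfolding H_fibre[OF assms] by (rule card_image)
qed

lemma FF_remove:
  assumes "finite J" "v \<in> J" "v \<in># L"
  shows "(\<Prod>j\<in>J. fact (count L j) :: real) = real (count L v) * (\<Prod>j\<in>J. fact (count (L - {#v#}) j))"
proof -
  have c: "count L v \<ge> 1" using assms(3) by simp
  have a: "(\<Prod>j\<in>J. fact (count (L - {#v#}) j) :: real) = fact (count L v - 1) * (\<Prod>j\<in>J-{v}. fact (count L j))"
  proof -
    have "(\<Prod>j\<in>J. fact (count (L - {#v#}) j) :: real) = fact (count (L - {#v#}) v) * (\<Prod>j\<in>J-{v}. fact (count (L - {#v#}) j))"
      using assms by (simp add: prod.remove)
    also have "(\<Prod>j\<in>J-{v}. fact (count (L - {#v#}) j) :: real) = (\<Prod>j\<in>J-{v}. fact (count L j))"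
      by (intro prod.cong) auto
    finally show ?thesis by simp
  qed
  have b: "(\<Prod>j\<in>J. fact (count L j) :: real) = fact (count L v) * (\<Prod>j\<in>J-{v}. fact (count L j))"
    using assms by (simp add: prod.remove)
  have cc: "(fact (count L v)::real) = real (count L v) * fact (count L v - 1)"
    using c by (metis fact_reduce not_one_le_zero of_nat_eq_0_iff bot_nat_0.not_eq_extremum) 
  show ?thesis by (simp only: a b cc mult.assoc)
qed

lemma count_H:
  assumes "finite D" "finite J" "0 \<notin> J"
  shows "set_mset L \<subseteq> J \<Longrightarrow> real (card (H D L)) * (\<Prod>j\<in>J. fact (count L j)) = ff (card D) (size L)"
  using assms(1)
proof (induction D arbitrary: L rule: finite_induct)
  case empty
  show ?case
  proof (cases "L = {#}")
    case True
    then have "H ({}::'a set) L = {\<lambda>_. undefined}" unfolding H_def by auto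
    then have "card (H ({}::'a set) L) = 1" by simp
    then show ?thesis using True by (simp add: ff_def)
  next
    case False
    then have "H ({}::'a set) L = {}" unfolding H_def by auto
    moreover obtain s where "size L = Suc s" using False by (cases "size L") auto
    ultimately show ?thesis by (simp add: ff_def prod.lessThan_Suc_shift del: prod.lessThan_Suc)
  qed
next
  case (insert x D)
  have L0: "0 \<notin># L" using insert.prems assms(3) by auto
  define V where "V = insert 0 (set_mset L)"
  have fV: "finite V" unfolding V_def by simp
  have img: "(\<lambda>h. h x) ` H (insert x D) L \<subseteq> V" unfolding H_def V_def by auto
  have "card (H (insert x D) L) = (\<Sum>v\<in>V. card {h \<in> H (insert x D) L. h x = v})"
    by (rule card_by_fibres[OF finite_H fV img]) (use insert in simp)
  also have "\<dots> = (\<Sum>v\<in>V. card (H D (if v = 0 then L else L - {#v#})))"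
    by (intro sum.cong refl card_H_fibre) (use insert L0 V_def in auto)
  also have "\<dots> = card (H D L) + (\<Sum>v\<in>set_mset L. card (H D (L - {#v#})))"
    unfolding V_def using L0 by (simp add: sum.insert) (intro sum.cong, auto)
  finally have C: "card (H (insert x D) L) = card (H D L) + (\<Sum>v\<in>set_mset L. card (H D (L - {#v#})))" .
  define FF where "FF M = (\<Prod>j\<in>J. fact (count M j) :: real)" for M
  have "real (card (H (insert x D) L)) * FF L = real (card (H D L)) * FF L + (\<Sum>v\<in>set_mset L. real (card (H D (L - {#v#}))) * FF L)"
    unfolding C by (simp add: algebra_simps sum_distrib_left)
  also have "(\<Sum>v\<in>set_mset L. real (card (H D (L - {#v#}))) * FF L) = (\<Sum>v\<in>set_mset L. real (count L v) * ff (card D) (size L - 1))"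
  proof (intro sum.cong refl)
    fix v assume v: "v \<in># L"
    have "set_mset (L - {#v#}) \<subseteq> J" using insert.prems by (auto dest: in_diffD)
    then have "real (card (H D (L - {#v#}))) * FF (L - {#v#}) = ff (card D) (size (L - {#v#}))"
      unfolding FF_def by (rule insert.IH)
    moreover have "FF L = real (count L v) * FF (L - {#v#})"
      unfolding FF_def using FF_remove[OF assms(2) _ v] v insert.prems by auto
    ultimately show "real (card (H D (L - {#v#}))) * FF L = real (count L v) * ff (card D) (size L - 1)"
      using v by (simp add: size_Diff_singleton)
  qed
  also have "\<dots> = real (size L) * ff (card D) (size L - 1)"
    by (simp add: sum_distrib_right[symmetric] size_multiset_overloaded_eq)
  also have "real (card (H D L)) * FF L = ff (card D) (size L)"
    unfolding FF_def using insert by blast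
  finally have E: "real (card (H (insert x D) L)) * FF L = ff (card D) (size L) + real (size L) * ff (card D) (size L - 1)" .
  show ?case
  proof (cases "size L")
    case 0
    then show ?thesis using E unfolding FF_def by (simp add: ff_def)
  next
    case (Suc s)
    then show ?thesis using E ff_Suc_Suc[of "card D" s] insert.hyps unfolding FF_def by simp
  qed
qed



definition Phi :: "nat \<Rightarrow> nat \<Rightarrow> nat set multiset \<Rightarrow> nat set multiset \<Rightarrow> nat set multiset" where
  "Phi n r \<pi> \<mu> = (\<pi> - \<mu>) + image_mset (insert n) \<mu> + replicate_mset (r - size \<mu>) {n}"

definition Mu :: "nat \<Rightarrow> nat set multiset \<Rightarrow> nat set multiset set" where
  "Mu r \<pi> = {\<mu>. \<mu> \<subseteq># \<pi> \<and> size \<mu> \<le> r}"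

lemma finite_Mu: "finite (Mu r \<pi>)"
proof -
  have "Mu r \<pi> \<subseteq> {M. set_mset M \<subseteq> set_mset \<pi> \<and> size M \<le> size \<pi>}"
    unfolding Mu_def by (auto dest: mset_subset_eqD size_mset_mono)
  then show ?thesis using finite_msets_bounded[of "set_mset \<pi>" "size \<pi>"] finite_subset by blast
qed

lemma filter_all: "(\<forall>x\<in>#M. Q x) \<Longrightarrow> filter_mset Q M = M"
  by (induction M) auto

lemma filter_none: "(\<forall>x\<in>#M. \<not> Q x) \<Longrightarrow> filter_mset Q M = {#}"
  by (induction M) auto

lemma image_id_on: "(\<forall>x\<in>#M. f x = x) \<Longrightarrow> image_mset f M = M"
  by (induction M) auto

lemma sum_add_single: "(\<Sum>X\<in>#M. f X + {#a#}) = (\<Sum>X\<in>#M. f X) + replicate_mset (size M) a"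
  by (induction M) (auto simp: add_ac)

lemma rep_plus: "replicate_mset a x + replicate_mset b x = replicate_mset (a + b) x"
  by (simp add: multiset_eq_iff)

lemma notin_msp:
  assumes "\<pi> \<in> msp (rep_mset r m)" "S \<in># \<pi>" shows "Suc m \<notin> S"
proof
  assume "Suc m \<in> S"
  then have "Suc m \<in># rep_mset r m" using msp_subset[OF assms] by auto
  then show False by (simp add: count_rep set_mset_def)
qed

lemma msp_ne: "\<pi> \<in> msp M \<Longrightarrow> S \<in># \<pi> \<Longrightarrow> S \<noteq> {} \<and> finite S"
  unfolding msp_def by auto

lemma Phi_msp:
  assumes pi: "\<pi> \<in> msp (rep_mset r m)" and mu: "\<mu> \<in> Mu r \<pi>"
  shows "Phi (Suc m) r \<pi> \<mu> \<in> msp (rep_mset r (Suc m))"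
proof -
  let ?n = "Suc m"
  have sub: "\<mu> \<subseteq># \<pi>" and sz: "size \<mu> \<le> r" using mu unfolding Mu_def by auto
  have muin: "S \<in># \<pi>" if "S \<in># \<mu>" for S using that sub by (auto dest: mset_subset_eqD)
  have "(\<Sum>X\<in>#image_mset (insert ?n) \<mu>. mset_set X) = (\<Sum>X\<in>#\<mu>. mset_set X + {#?n#})"
    unfolding multiset.map_comp o_def
    by (intro arg_cong[where f=sum_mset] image_mset_cong)
       (use muin notin_msp[OF pi] msp_ne[OF pi] in \<open>auto simp: mset_set.insert\<close>)
  also have "\<dots> = (\<Sum>X\<in>#\<mu>. mset_set X) + replicate_mset (size \<mu>) ?n" by (rule sum_add_single)
  finally have s1: "(\<Sum>X\<in>#image_mset (insert ?n) \<mu>. mset_set X) = (\<Sum>X\<in>#\<mu>. mset_set X) + replicate_mset (size \<mu>) ?n" .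
  have s2: "(\<Sum>X\<in>#replicate_mset k {?n}. mset_set X) = replicate_mset k ?n" for k
    by (induction k) auto
  have s3: "(\<Sum>X\<in>#\<pi> - \<mu>. mset_set X) + (\<Sum>X\<in>#\<mu>. mset_set X) = (\<Sum>X\<in>#\<pi>. mset_set X)"
    by (metis image_mset_union sub subset_mset.diff_add sum_mset.union)
  have rep: "replicate_mset (size \<mu>) ?n + replicate_mset (r - size \<mu>) ?n = replicate_mset r ?n"
    using sz by (simp add: rep_plus)
  have "(\<Sum>X\<in>#Phi ?n r \<pi> \<mu>. mset_set X) = (\<Sum>X\<in>#\<pi>. mset_set X) + replicate_mset r ?n"
    unfolding Phi_def image_mset_union sum_mset.union s1 s2 
    by (simp add: s3[symmetric] rep[symmetric] add_ac)
  also have "\<dots> = rep_mset r ?n" using pi unfolding msp_def rep_mset_Suc by simp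
  finally have sum: "(\<Sum>X\<in>#Phi ?n r \<pi> \<mu>. mset_set X) = rep_mset r ?n" .
  have "\<forall>S\<in>#Phi ?n r \<pi> \<mu>. S \<noteq> {} \<and> finite S"
    unfolding Phi_def using msp_ne[OF pi] muin by (auto dest: in_diffD)
  with sum show ?thesis unfolding msp_def by simp
qed

definition Psi1 :: "nat \<Rightarrow> nat set multiset \<Rightarrow> nat set multiset" where
  "Psi1 n \<pi>' = image_mset (\<lambda>X. X - {n}) (filter_mset (\<lambda>X. X \<noteq> {n}) \<pi>')"
definition Psi2 :: "nat \<Rightarrow> nat set multiset \<Rightarrow> nat set multiset" where
  "Psi2 n \<pi>' = image_mset (\<lambda>X. X - {n}) (filter_mset (\<lambda>X. n \<in> X \<and> X \<noteq> {n}) \<pi>')"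

lemma Psi_Phi:
  assumes pi: "\<pi> \<in> msp (rep_mset r m)" and mu: "\<mu> \<in> Mu r \<pi>"
  shows "Psi1 (Suc m) (Phi (Suc m) r \<pi> \<mu>) = \<pi> \<and> Psi2 (Suc m) (Phi (Suc m) r \<pi> \<mu>) = \<mu>"
proof -
  let ?n = "Suc m"
  have sub: "\<mu> \<subseteq># \<pi>" using mu unfolding Mu_def by auto
  have muin: "S \<in># \<pi>" if "S \<in># \<mu>" for S using that sub by (auto dest: mset_subset_eqD)
  have dd: "S \<in># \<pi> - \<mu> \<Longrightarrow> S \<in># \<pi>" for S by (auto dest: in_diffD)
  note ni = notin_msp[OF pi] and ne = msp_ne[OF pi]
  have f1: "filter_mset (\<lambda>X. X \<noteq> {?n}) (\<pi> - \<mu>) = \<pi> - \<mu>"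
    by (rule filter_all) (use dd ni in blast)
  have f2: "filter_mset (\<lambda>X. X \<noteq> {?n}) (image_mset (insert ?n) \<mu>) = image_mset (insert ?n) \<mu>"
    by (rule filter_all) (use muin ni ne in auto)
  have f3: "filter_mset (\<lambda>X. X \<noteq> {?n}) (replicate_mset k {?n}) = {#}" for k
    by (rule filter_none) auto
  have g1: "filter_mset (\<lambda>X. ?n \<in> X \<and> X \<noteq> {?n}) (\<pi> - \<mu>) = {#}"
    by (rule filter_none) (use dd ni in blast)
  have g2: "filter_mset (\<lambda>X. ?n \<in> X \<and> X \<noteq> {?n}) (image_mset (insert ?n) \<mu>) = image_mset (insert ?n) \<mu>"
    by (rule filter_all) (use muin ni ne in auto)
  have g3: "filter_mset (\<lambda>X. ?n \<in> X \<and> X \<noteq> {?n}) (replicate_mset k {?n}) = {#}" for k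
    by (rule filter_none) auto
  have i1: "image_mset (\<lambda>X. X - {?n}) (\<pi> - \<mu>) = \<pi> - \<mu>"
    by (rule image_id_on) (use dd ni in auto)
  have i2: "image_mset (\<lambda>X. X - {?n}) (image_mset (insert ?n) \<mu>) = \<mu>"
    unfolding multiset.map_comp o_def by (rule image_id_on) (use muin ni in auto)
  show ?thesis
    unfolding Psi1_def Psi2_def Phi_def filter_union_mset f1 f2 f3 g1 g2 g3 image_mset_union i1 i2
    using sub by simp
qed

lemma inj_Phi: "inj_on (\<lambda>(\<pi>, \<mu>). Phi (Suc m) r \<pi> \<mu>) (Sigma (msp (rep_mset r m)) (Mu r))"
  by (rule inj_onI) (auto dest!: Psi_Phi)



lemma mset_set_rm: "finite X \<Longrightarrow> n \<in> X \<Longrightarrow> mset_set X = mset_set (X - {n}) + {#n#}"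
  by (metis add_mset_add_single mset_set.remove)

lemma Phi_surj:
  assumes pi': "\<pi>' \<in> msp (rep_mset r (Suc m))"
  shows "\<exists>\<pi> \<mu>. \<pi> \<in> msp (rep_mset r m) \<and> \<mu> \<in> Mu r \<pi> \<and> \<pi>' = Phi (Suc m) r \<pi> \<mu>"
proof -
  let ?n = "Suc m"
  define A where "A = filter_mset (\<lambda>X. ?n \<notin> X) \<pi>'"
  define B where "B = filter_mset (\<lambda>X. ?n \<in> X \<and> X \<noteq> {?n}) \<pi>'"
  define C where "C = filter_mset (\<lambda>X. X = {?n}) \<pi>'"
  have part: "\<pi>' = A + B + C" unfolding A_def B_def C_def by (auto simp: multiset_eq_iff)
  have ne': "X \<noteq> {} \<and> finite X" if "X \<in># \<pi>'" for X using that pi' unfolding msp_def by auto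
  have Cr: "C = replicate_mset (count \<pi>' {?n}) {?n}" unfolding C_def by (rule filter_eq_replicate_mset)
  define \<mu> where "\<mu> = image_mset (\<lambda>X. X - {?n}) B"
  define \<pi> where "\<pi> = A + \<mu>"
  have inB: "X \<in># \<pi>' \<and> ?n \<in> X \<and> X \<noteq> {?n}" if "X \<in># B" for X using that unfolding B_def by auto
  have inA: "X \<in># \<pi>' \<and> ?n \<notin> X" if "X \<in># A" for X using that unfolding A_def by auto
  have "(\<Sum>X\<in>#B. mset_set X) = (\<Sum>X\<in>#B. mset_set (X - {?n}) + {#?n#})"
    by (intro arg_cong[where f=sum_mset] image_mset_cong mset_set_rm) (use inB ne' in auto)
  also have "\<dots> = (\<Sum>X\<in>#\<mu>. mset_set X) + replicate_mset (size B) ?n"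
    unfolding sum_add_single \<mu>_def multiset.map_comp o_def ..
  finally have sumB: "(\<Sum>X\<in>#B. mset_set X) = (\<Sum>X\<in>#\<mu>. mset_set X) + replicate_mset (size B) ?n" .
  have s2: "(\<Sum>X\<in>#replicate_mset k {?n}. mset_set X) = replicate_mset k ?n" for k
    by (induction k) auto
  have sumC: "(\<Sum>X\<in>#C. mset_set X) = replicate_mset (size C) ?n" unfolding Cr s2 by simp
  have tot: "rep_mset r m + replicate_mset r ?n = (\<Sum>X\<in>#A. mset_set X) + (\<Sum>X\<in>#\<mu>. mset_set X) + replicate_mset (size B + size C) ?n"
  proof -
    have "rep_mset r m + replicate_mset r ?n = (\<Sum>X\<in>#\<pi>'. mset_set X)"
      using pi' unfolding msp_def rep_mset_Suc by simp
    also have "\<dots> = (\<Sum>X\<in>#A. mset_set X) + (\<Sum>X\<in>#B. mset_set X) + (\<Sum>X\<in>#C. mset_set X)"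
      by (subst part) simp
    finally show ?thesis unfolding sumB sumC by (simp add: rep_plus[symmetric] add_ac)
  qed
  have cA: "count (\<Sum>X\<in>#A. mset_set X) ?n = 0"
    unfolding count_sum_mset' by (rule sum_mset.neutral) (use inA ne' in auto)
  have cM: "count (\<Sum>X\<in>#\<mu>. mset_set X) ?n = 0"
    unfolding count_sum_mset' by (rule sum_mset.neutral) (use inB ne' \<mu>_def in auto)
  have "r = count (rep_mset r m + replicate_mset r ?n) ?n" by (simp add: count_rep)
  also have "\<dots> = size B + size C" unfolding tot using cA cM by simp
  finally have rBC: "r = size B + size C" .
  have sumpi: "(\<Sum>X\<in>#\<pi>. mset_set X) = rep_mset r m"
    using tot unfolding rBC \<pi>_def by simp
  have pim: "\<pi> \<in> msp (rep_mset r m)"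
    unfolding msp_def using sumpi inA inB ne' unfolding \<pi>_def \<mu>_def by fastforce
  have mum: "\<mu> \<in> Mu r \<pi>" unfolding Mu_def \<pi>_def using rBC \<mu>_def by simp
  have imB: "image_mset (insert ?n) \<mu> = B"
    unfolding \<mu>_def multiset.map_comp o_def by (rule image_id_on) (use inB in auto)
  have "Phi ?n r \<pi> \<mu> = A + B + C"
    unfolding Phi_def imB using rBC Cr by (simp add: \<pi>_def \<mu>_def)
  then show ?thesis using part pim mum by metis
qed

lemma msp_Suc_image:
  "msp (rep_mset r (Suc m)) = (\<lambda>(\<pi>, \<mu>). Phi (Suc m) r \<pi> \<mu>) ` Sigma (msp (rep_mset r m)) (Mu r)"
proof
  show "msp (rep_mset r (Suc m)) \<subseteq> (\<lambda>(\<pi>, \<mu>). Phi (Suc m) r \<pi> \<mu>) ` Sigma (msp (rep_mset r m)) (Mu r)"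
  proof
    fix \<pi>' assume "\<pi>' \<in> msp (rep_mset r (Suc m))"
    then obtain \<pi> \<mu> where "\<pi> \<in> msp (rep_mset r m)" "\<mu> \<in> Mu r \<pi>" "\<pi>' = Phi (Suc m) r \<pi> \<mu>"
      using Phi_surj by blast
    then show "\<pi>' \<in> (\<lambda>(\<pi>, \<mu>). Phi (Suc m) r \<pi> \<mu>) ` Sigma (msp (rep_mset r m)) (Mu r)" by force
  qed
qed (auto intro: Phi_msp)

lemma sum_msp_Suc:
  "(\<Sum>\<pi>'\<in>msp (rep_mset r (Suc m)). g \<pi>') = (\<Sum>\<pi>\<in>msp (rep_mset r m). \<Sum>\<mu>\<in>Mu r \<pi>. g (Phi (Suc m) r \<pi> \<mu>))"
proof -
  have "(\<Sum>\<pi>'\<in>msp (rep_mset r (Suc m)). g \<pi>') = (\<Sum>(\<pi>,\<mu>)\<in>Sigma (msp (rep_mset r m)) (Mu r). g (Phi (Suc m) r \<pi> \<mu>))"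
    unfolding msp_Suc_image sum.reindex[OF inj_Phi] by (intro sum.cong) auto
  also have "\<dots> = (\<Sum>\<pi>\<in>msp (rep_mset r m). \<Sum>\<mu>\<in>Mu r \<pi>. g (Phi (Suc m) r \<pi> \<mu>))"
    by (rule sum.Sigma[symmetric]) (auto simp: finite_msp finite_Mu)
  finally show ?thesis .
qed



lemma group_pow:
  assumes "finite X" "finite J" "h ` X \<subseteq> J"
  shows "(\<Prod>x\<in>X. f (h x)) = (\<Prod>j\<in>J. f j ^ card {x\<in>X. h x = j})"
proof -
  have "(\<Prod>x\<in>X. f (h x)) = (\<Prod>j\<in>J. \<Prod>x\<in>{x\<in>X. h x = j}. f (h x))"
    by (rule prod.group[symmetric, OF assms])
  also have "\<dots> = (\<Prod>j\<in>J. f j ^ card {x\<in>X. h x = j})"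
    by (intro prod.cong refl) simp
  finally show ?thesis .
qed

lemma W_eq:
  fixes z :: "nat \<Rightarrow> real"
  assumes "\<And>S. S \<in># \<pi> \<Longrightarrow> count \<pi> S \<le> r" "finite Y" "set_mset \<pi> \<subseteq> Y"
  shows "(\<Prod>i\<in>{1..r}. z i ^ a_cnt i \<pi>) = (\<Prod>X\<in>Y. (z(0 := 1)) (count \<pi> X))"
proof -
  have "(\<Prod>X\<in>set_mset \<pi>. (z(0 := 1)) (count \<pi> X)) = (\<Prod>i\<in>{1..r}. (z(0 := 1)) i ^ card {X\<in>set_mset \<pi>. count \<pi> X = i})"
    by (rule group_pow) (use assms(1) in \<open>auto simp: Suc_le_eq\<close>)
  also have "\<dots> = (\<Prod>i\<in>{1..r}. z i ^ a_cnt i \<pi>)"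
    unfolding a_cnt_def by (intro prod.cong refl) auto
  finally have 1: "(\<Prod>i\<in>{1..r}. z i ^ a_cnt i \<pi>) = (\<Prod>X\<in>set_mset \<pi>. (z(0 := 1)) (count \<pi> X))" by simp
  also have "\<dots> = (\<Prod>X\<in>Y. (z(0 := 1)) (count \<pi> X))"
    by (rule prod.mono_neutral_left) (use assms in \<open>auto simp: not_in_iff\<close>)
  finally show ?thesis .
qed

lemma count_Phi:
  assumes pi: "\<pi> \<in> msp (rep_mset r m)" and mu: "\<mu> \<in> Mu r \<pi>" and S: "S \<in># \<pi>"
  shows "count (Phi (Suc m) r \<pi> \<mu>) S = count \<pi> S - count \<mu> S"
    and "count (Phi (Suc m) r \<pi> \<mu>) (insert (Suc m) S) = count \<mu> S"
proof -
  let ?n = "Suc m"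
  have sub: "\<mu> \<subseteq># \<pi>" using mu unfolding Mu_def by auto
  have muin: "T \<in># \<pi>" if "T \<in># \<mu>" for T using that sub by (auto dest: mset_subset_eqD)
  note ni = notin_msp[OF pi] and ne = msp_ne[OF pi]
  have "S \<notin># image_mset (insert ?n) \<mu>" using ni[OF S] by auto
  then have c1: "count (image_mset (insert ?n) \<mu>) S = 0" by (meson not_in_iff)
  have "S \<noteq> {?n}" using ni[OF S] by auto
  then show "count (Phi (Suc m) r \<pi> \<mu>) S = count \<pi> S - count \<mu> S"
    unfolding Phi_def using c1 by simp
  have "insert ?n S \<notin># \<pi>" using ni by blast
  then have c2: "count (\<pi> - \<mu>) (insert ?n S) = 0" by (simp add: not_in_iff)
  have pre: "insert ?n -` {insert ?n S} \<inter> set_mset \<mu> = {S} \<inter> set_mset \<mu>"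
  proof (intro equalityI subsetI)
    fix T assume "T \<in> insert ?n -` {insert ?n S} \<inter> set_mset \<mu>"
    then have "insert ?n T = insert ?n S" "?n \<notin> T" "?n \<notin> S" using ni muin S by auto
    then have "T = S" by (metis Diff_insert_absorb)
    then show "T \<in> {S} \<inter> set_mset \<mu>" using \<open>T \<in> _\<close> by auto
  qed auto
  have c3: "count (image_mset (insert ?n) \<mu>) (insert ?n S) = count \<mu> S"
    unfolding count_image_mset pre by (cases "S \<in># \<mu>") (auto simp: not_in_iff)
  have "insert ?n S \<noteq> {?n}" using ni[OF S] ne[OF S] by auto
  then show "count (Phi (Suc m) r \<pi> \<mu>) (insert (Suc m) S) = count \<mu> S"
    unfolding Phi_def using c2 c3 by simp
qed

lemma count_Phi_n:
  assumes pi: "\<pi> \<in> msp (rep_mset r m)" and mu: "\<mu> \<in> Mu r \<pi>"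
  shows "count (Phi (Suc m) r \<pi> \<mu>) {Suc m} = r - size \<mu>"
proof -
  let ?n = "Suc m"
  have sub: "\<mu> \<subseteq># \<pi>" using mu unfolding Mu_def by auto
  have muin: "T \<in># \<pi>" if "T \<in># \<mu>" for T using that sub by (auto dest: mset_subset_eqD)
  note ni = notin_msp[OF pi] and ne = msp_ne[OF pi]
  have "{?n} \<notin># \<pi>" using ni by blast
  then have c1: "count (\<pi> - \<mu>) {?n} = 0" by (simp add: not_in_iff)
  have "{?n} \<notin># image_mset (insert ?n) \<mu>"
  proof
    assume "{?n} \<in># image_mset (insert ?n) \<mu>"
    then obtain T where T: "T \<in># \<mu>" "{?n} = insert ?n T" by auto
    then have "T \<subseteq> {?n}" by blast
    then have "T = {}" using ni[OF muin[OF T(1)]] by blast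
    then show False using ne[OF muin[OF T(1)]] by blast
  qed
  then have c2: "count (image_mset (insert ?n) \<mu>) {?n} = 0" by (meson not_in_iff)
  show ?thesis unfolding Phi_def using c1 c2 by simp
qed

definition hw :: "nat \<Rightarrow> (nat \<Rightarrow> real) \<Rightarrow> nat set multiset \<Rightarrow> (nat set \<Rightarrow> nat) \<Rightarrow> real" where
  "hw r z \<pi> g = (z(0:=1)) (r - (\<Sum>S\<in>set_mset \<pi>. g S)) *
     (\<Prod>S\<in>set_mset \<pi>. (z(0:=1)) (count \<pi> S - g S) * (z(0:=1)) (g S))"

lemma size_as_sum:
  assumes "\<mu> \<subseteq># \<pi>" shows "size \<mu> = (\<Sum>S\<in>set_mset \<pi>. count \<mu> S)"
  unfolding size_multiset_overloaded_eq
  by (rule sum.mono_neutral_left) (use assms in \<open>auto dest: mset_subset_eqD simp: not_in_iff\<close>)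

lemma W_Phi:
  fixes z :: "nat \<Rightarrow> real"
  assumes pi: "\<pi> \<in> msp (rep_mset r m)" and mu: "\<mu> \<in> Mu r \<pi>"
  shows "(\<Prod>i\<in>{1..r}. z i ^ a_cnt i (Phi (Suc m) r \<pi> \<mu>)) = hw r z \<pi> (restrict (count \<mu>) (set_mset \<pi>))"
proof -
  let ?n = "Suc m" and ?P = "Phi (Suc m) r \<pi> \<mu>" and ?zz = "z(0:=1)"
  have sub: "\<mu> \<subseteq># \<pi>" using mu unfolding Mu_def by auto
  have muin: "T \<in># \<pi>" if "T \<in># \<mu>" for T using that sub by (auto dest: mset_subset_eqD)
  note ni = notin_msp[OF pi] and ne = msp_ne[OF pi]
  define Y where "Y = insert {?n} (set_mset \<pi> \<union> insert ?n ` set_mset \<pi>)"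
  define f where "f X = ?zz (count ?P X)" for X
  have PY: "set_mset ?P \<subseteq> Y" unfolding Y_def Phi_def using muin by (auto dest: in_diffD)
  have PM: "?P \<in> msp (rep_mset r ?n)" by (rule Phi_msp[OF pi mu])
  have "(\<Prod>i\<in>{1..r}. z i ^ a_cnt i ?P) = (\<Prod>X\<in>Y. f X)"
    unfolding f_def by (rule W_eq) (use count_le_r[OF PM] PY Y_def in auto)
  also have "\<dots> = (\<Prod>X\<in>set_mset \<pi>. f X) * ((\<Prod>X\<in>insert ?n ` set_mset \<pi>. f X) * f {?n})"
  proof -
    have d0: "{?n} \<notin> set_mset \<pi> \<union> insert ?n ` set_mset \<pi>" using ni ne by blast
    have d1: "set_mset \<pi> \<inter> insert ?n ` set_mset \<pi> = {}" using ni by auto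
    have "(\<Prod>X\<in>Y. f X) = f {?n} * (\<Prod>X\<in>set_mset \<pi> \<union> insert ?n ` set_mset \<pi>. f X)"
      unfolding Y_def using d0 by (simp add: prod.insert)
    also have "(\<Prod>X\<in>set_mset \<pi> \<union> insert ?n ` set_mset \<pi>. f X) = (\<Prod>X\<in>set_mset \<pi>. f X) * (\<Prod>X\<in>insert ?n ` set_mset \<pi>. f X)"
      by (rule prod.union_disjoint) (use d1 in auto)
    finally show ?thesis by (simp add: mult_ac)
  qed
  also have "(\<Prod>X\<in>insert ?n ` set_mset \<pi>. f X) = (\<Prod>S\<in>set_mset \<pi>. ?zz (count \<mu> S))"
  proof -
    have "inj_on (insert ?n) (set_mset \<pi>)"
      by (rule inj_onI) (metis Diff_insert_absorb ni)
    then have "(\<Prod>X\<in>insert ?n ` set_mset \<pi>. f X) = (\<Prod>S\<in>set_mset \<pi>. f (insert ?n S))"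
      by (simp add: prod.reindex)
    also have "\<dots> = (\<Prod>S\<in>set_mset \<pi>. ?zz (count \<mu> S))"
      by (intro prod.cong refl) (simp add: f_def count_Phi(2)[OF pi mu])
    finally show ?thesis .
  qed
  also have "(\<Prod>X\<in>set_mset \<pi>. f X) = (\<Prod>S\<in>set_mset \<pi>. ?zz (count \<pi> S - count \<mu> S))"
    by (intro prod.cong refl) (simp add: count_Phi(1)[OF pi mu] f_def)
  also have "f {?n} = ?zz (r - (\<Sum>S\<in>set_mset \<pi>. count \<mu> S))"
    using count_Phi_n[OF pi mu] size_as_sum[OF sub] f_def by simp
  finally show ?thesis unfolding hw_def by (simp add: prod.distrib mult_ac)
qed

definition G :: "nat \<Rightarrow> nat set multiset \<Rightarrow> (nat set \<Rightarrow> nat) set" where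
  "G r \<pi> = {g \<in> PiE (set_mset \<pi>) (\<lambda>S. {0..count \<pi> S}). (\<Sum>S\<in>set_mset \<pi>. g S) \<le> r}"

lemma finite_G: "finite (G r \<pi>)"
  unfolding G_def by (rule finite_subset[of _ "PiE (set_mset \<pi>) (\<lambda>S. {0..count \<pi> S})"]) (auto intro: finite_PiE)

lemma inj_restr: "inj_on (\<lambda>\<mu>. restrict (count \<mu>) (set_mset \<pi>)) (Mu r \<pi>)"
proof (rule inj_onI)
  fix \<mu> \<mu>' assume a: "\<mu> \<in> Mu r \<pi>" "\<mu>' \<in> Mu r \<pi>" and e: "restrict (count \<mu>) (set_mset \<pi>) = restrict (count \<mu>') (set_mset \<pi>)"
  show "\<mu> = \<mu>'" unfolding multiset_eq_iff
  proof
    fix S show "count \<mu> S = count \<mu>' S"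
    proof (cases "S \<in># \<pi>")
      case True then show ?thesis using fun_cong[OF e, of S] by simp
    next
      case False
      then have "S \<notin># \<mu>" "S \<notin># \<mu>'" using a unfolding Mu_def by (auto dest: mset_subset_eqD)
      then show ?thesis by (simp add: not_in_iff)
    qed
  qed
qed

lemma image_restr: "(\<lambda>\<mu>. restrict (count \<mu>) (set_mset \<pi>)) ` Mu r \<pi> = G r \<pi>"
proof
  show "(\<lambda>\<mu>. restrict (count \<mu>) (set_mset \<pi>)) ` Mu r \<pi> \<subseteq> G r \<pi>"
  proof
    fix g assume "g \<in> (\<lambda>\<mu>. restrict (count \<mu>) (set_mset \<pi>)) ` Mu r \<pi>"
    then obtain \<mu> where mu: "\<mu> \<in> Mu r \<pi>" and g: "g = restrict (count \<mu>) (set_mset \<pi>)" by blast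
    have sub: "\<mu> \<subseteq># \<pi>" and sz: "size \<mu> \<le> r" using mu unfolding Mu_def by auto
    have "(\<Sum>S\<in>set_mset \<pi>. g S) = size \<mu>" unfolding g size_as_sum[OF sub] by simp
    then show "g \<in> G r \<pi>" unfolding G_def g using sub sz by (auto simp: mset_subset_eq_count)
  qed
next
  show "G r \<pi> \<subseteq> (\<lambda>\<mu>. restrict (count \<mu>) (set_mset \<pi>)) ` Mu r \<pi>"
  proof
    fix g assume g: "g \<in> G r \<pi>"
    define \<mu> where "\<mu> = (\<Sum>S\<in>set_mset \<pi>. replicate_mset (g S) S)"
    have c: "count \<mu> X = (if X \<in># \<pi> then g X else 0)" for X
      unfolding \<mu>_def count_sum by (simp add: count_replicate_mset)
    have sub: "\<mu> \<subseteq># \<pi>" unfolding subseteq_mset_def c using g unfolding G_def by auto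
    have "size \<mu> = (\<Sum>S\<in>set_mset \<pi>. g S)" unfolding size_as_sum[OF sub] c by simp
    then have "\<mu> \<in> Mu r \<pi>" unfolding Mu_def using sub g G_def by auto
    moreover have "g = restrict (count \<mu>) (set_mset \<pi>)"
      using g unfolding G_def by (auto simp: c fun_eq_iff PiE_iff extensional_def)
    ultimately show "g \<in> (\<lambda>\<mu>. restrict (count \<mu>) (set_mset \<pi>)) ` Mu r \<pi>" by blast
  qed
qed

lemma sum_Mu_G:
  fixes z :: "nat \<Rightarrow> real"
  assumes pi: "\<pi> \<in> msp (rep_mset r m)"
  shows "(\<Sum>\<mu>\<in>Mu r \<pi>. \<Prod>i\<in>{1..r}. z i ^ a_cnt i (Phi (Suc m) r \<pi> \<mu>)) = (\<Sum>g\<in>G r \<pi>. hw r z \<pi> g)"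
proof -
  have "(\<Sum>\<mu>\<in>Mu r \<pi>. \<Prod>i\<in>{1..r}. z i ^ a_cnt i (Phi (Suc m) r \<pi> \<mu>)) = (\<Sum>\<mu>\<in>Mu r \<pi>. hw r z \<pi> (restrict (count \<mu>) (set_mset \<pi>)))"
    by (intro sum.cong refl W_Phi[OF pi])
  also have "\<dots> = (\<Sum>g\<in>G r \<pi>. hw r z \<pi> g)"
    unfolding image_restr[symmetric] sum.reindex[OF inj_restr] by simp
  finally show ?thesis .
qed



definition Dd :: "nat set multiset \<Rightarrow> nat \<Rightarrow> nat set set" where
  "Dd \<pi> i = {S \<in> set_mset \<pi>. count \<pi> S = i}"

definition lam :: "nat \<Rightarrow> nat set multiset \<Rightarrow> (nat set \<Rightarrow> nat) \<Rightarrow> nat \<Rightarrow> nat multiset" where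
  "lam r \<pi> g i = (if i \<in> {1..r} then filter_mset (\<lambda>j. j \<noteq> 0) (image_mset g (mset_set (Dd \<pi> i))) else {#})"

definition tyf :: "nat \<Rightarrow> nat set multiset \<Rightarrow> (nat set \<Rightarrow> nat) \<Rightarrow> nat \<times> (nat \<Rightarrow> nat multiset)" where
  "tyf r \<pi> g = (r - (\<Sum>S\<in>set_mset \<pi>. g S), lam r \<pi> g)"

definition termT :: "nat \<Rightarrow> (nat \<Rightarrow> real) \<Rightarrow> nat set multiset \<Rightarrow> nat \<times> (nat \<Rightarrow> nat multiset) \<Rightarrow> real" where
  "termT r z \<pi> T = (z(0:=1)) (fst T) * (\<Prod>i\<in>{1..r}. z i ^ (a_cnt i \<pi> - size (snd T i)) *
      (\<Prod>j\<in>{1..i}. ((z(0:=1)) j * (z(0:=1)) (i - j)) ^ count (snd T i) j))"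

lemma finite_Dd: "finite (Dd \<pi> i)" unfolding Dd_def by simp

lemma card_Dd: "card (Dd \<pi> i) = a_cnt i \<pi>" unfolding Dd_def a_cnt_def by simp

lemma sum_mset_filter0: "sum_mset (filter_mset (\<lambda>j. j \<noteq> 0) M) = sum_mset (M :: nat multiset)"
  by (induction M) auto

lemma sum_as_lam: fixes g :: "'a \<Rightarrow> nat" shows "finite D \<Longrightarrow> (\<Sum>S\<in>D. g S) = sum_mset (filter_mset (\<lambda>j. j \<noteq> 0) (image_mset g (mset_set D)))"
  using sum_mset_filter0[of "image_mset g (mset_set D)"] by (simp add: sum_unfold_sum_mset)

lemma size_le_sum_mset: "0 \<notin># M \<Longrightarrow> size M \<le> sum_mset (M :: nat multiset)"
  by (induction M) auto

lemma finite_scenarios: "finite (scenarios r)"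
proof -
  define Ms where "Ms = {M :: nat multiset. set_mset M \<subseteq> {1..r} \<and> size M \<le> r}"
  have fMs: "finite Ms" unfolding Ms_def by (rule finite_msets_bounded) simp
  have "scenarios r \<subseteq> {0..r} \<times> {l. \<forall>i. (i \<in> {1..r} \<longrightarrow> l i \<in> Ms) \<and> (i \<notin> {1..r} \<longrightarrow> l i = {#})}"
  proof
    fix T assume "T \<in> scenarios r"
    then obtain c l where T: "T = (c, l)" and s1: "\<forall>i. set_mset (l i) \<subseteq> {1..i}"
      and s2: "\<forall>i. i \<notin> {1..r} \<longrightarrow> l i = {#}" and s3: "c + (\<Sum>i=1..r. sum_mset (l i)) = r"
      unfolding scenarios_def by auto
    have "l i \<in> Ms" if i: "i \<in> {1..r}" for i
    proof -
      have "size (l i) \<le> sum_mset (l i)" using s1 by (intro size_le_sum_mset) force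
      also have "\<dots> \<le> (\<Sum>i=1..r. sum_mset (l i))" by (rule member_le_sum) (use i in auto)
      finally have "size (l i) \<le> r" using s3 by linarith
      moreover have "set_mset (l i) \<subseteq> {1..r}" using s1 i by force
      ultimately show ?thesis unfolding Ms_def by simp
    qed
    then show "T \<in> {0..r} \<times> {l. \<forall>i. (i \<in> {1..r} \<longrightarrow> l i \<in> Ms) \<and> (i \<notin> {1..r} \<longrightarrow> l i = {#})}"
      using T s2 s3 by auto
  qed
  moreover have "finite ({0..r} \<times> {l. \<forall>i. (i \<in> {1..r} \<longrightarrow> l i \<in> Ms) \<and> (i \<notin> {1..r} \<longrightarrow> l i = {#})})"
    using finite_set_of_finite_funs[OF finite_atLeastAtMost fMs, of 1 r "{#}"] by simp
  ultimately show ?thesis by (rule finite_subset)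
qed

context
  fixes r m :: nat and \<pi> :: "nat set multiset"
  assumes pi: "\<pi> \<in> msp (rep_mset r m)"
begin

lemma cnt_range: "S \<in># \<pi> \<Longrightarrow> count \<pi> S \<in> {1..r}"
  using count_le_r[OF pi] by (auto simp: Suc_le_eq)

lemma sum_split: "(\<Sum>S\<in>set_mset \<pi>. q S) = (\<Sum>i\<in>{1..r}. \<Sum>S\<in>Dd \<pi> i. q S)"
  unfolding Dd_def by (rule sum.group[symmetric]) (use cnt_range in auto)

lemma prod_split: "(\<Prod>S\<in>set_mset \<pi>. q S) = (\<Prod>i\<in>{1..r}. \<Prod>S\<in>Dd \<pi> i. q S)"
  unfolding Dd_def by (rule prod.group[symmetric]) (use cnt_range in auto)

lemma tyf_scen: "g \<in> G r \<pi> \<Longrightarrow> tyf r \<pi> g \<in> scenarios r"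
proof -
  assume g: "g \<in> G r \<pi>"
  have s: "(\<Sum>i=1..r. sum_mset (lam r \<pi> g i)) = (\<Sum>S\<in>set_mset \<pi>. g S)"
    unfolding sum_split by (intro sum.cong refl) (simp add: lam_def sum_as_lam[OF finite_Dd])
  have "set_mset (lam r \<pi> g i) \<subseteq> {1..i}" for i
  proof
    fix j assume "j \<in># lam r \<pi> g i"
    then obtain S where "i \<in> {1..r}" "S \<in> Dd \<pi> i" "j = g S" "j \<noteq> 0"
      unfolding lam_def by (auto split: if_splits simp: finite_Dd)
    moreover then have "g S \<le> count \<pi> S" using g unfolding G_def Dd_def by auto
    ultimately show "j \<in> {1..i}" unfolding Dd_def by auto
  qed
  moreover have "(\<Sum>S\<in>set_mset \<pi>. g S) \<le> r" using g unfolding G_def by auto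
  ultimately show ?thesis unfolding scenarios_def tyf_def using s by (auto simp: lam_def)
qed

lemma card_zero_Dd:
  "card {S \<in> Dd \<pi> i. g S = 0} = card (Dd \<pi> i) - size (filter_mset (\<lambda>j. j \<noteq> 0) (image_mset g (mset_set (Dd \<pi> i))))"
proof -
  let ?M = "image_mset g (mset_set (Dd \<pi> i))"
  have "size ?M = size (filter_mset (\<lambda>j. j \<noteq> 0) ?M) + size (filter_mset (\<lambda>j. j = 0) ?M)"
    by (metis (mono_tags, lifting) filter_mset_cong multiset_partition size_union)
  moreover have "size (filter_mset (\<lambda>j. j = 0) ?M) = card {S \<in> Dd \<pi> i. g S = 0}"
  proof -
    have "size (filter_mset (\<lambda>j. j = 0) ?M) = count ?M 0" by (rule count_conv_size_mset[symmetric])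
    also have "\<dots> = card {S \<in> Dd \<pi> i. g S = 0}" by (rule count_image_mset_eq_card_vimage[OF finite_Dd])
    finally show ?thesis .
  qed
  ultimately show ?thesis by simp
qed

lemma hw_tyf:
  assumes g: "g \<in> G r \<pi>"
  shows "hw r z \<pi> g = termT r z \<pi> (tyf r \<pi> g)"
proof -
  let ?zz = "z(0:=1)"
  have "(\<Prod>S\<in>set_mset \<pi>. ?zz (count \<pi> S - g S) * ?zz (g S)) =
        (\<Prod>i\<in>{1..r}. \<Prod>S\<in>Dd \<pi> i. ?zz (i - g S) * ?zz (g S))"
    unfolding prod_split by (intro prod.cong refl) (auto simp: Dd_def)
  also have "\<dots> = (\<Prod>i\<in>{1..r}. z i ^ (a_cnt i \<pi> - size (lam r \<pi> g i)) *
      (\<Prod>j\<in>{1..i}. (?zz j * ?zz (i - j)) ^ count (lam r \<pi> g i) j))"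
  proof (intro prod.cong refl)
    fix i assume i: "i \<in> {1..r}"
    have gle: "g S \<le> i" if "S \<in> Dd \<pi> i" for S using g that unfolding G_def Dd_def by auto
    have "(\<Prod>S\<in>Dd \<pi> i. ?zz (i - g S) * ?zz (g S)) = (\<Prod>j\<in>{0..i}. (?zz (i - j) * ?zz j) ^ card {S \<in> Dd \<pi> i. g S = j})"
      by (rule group_pow[OF finite_Dd]) (use gle in auto)
    also have "{0..i} = insert 0 {1..i}" by auto
    also have "(\<Prod>j\<in>insert 0 {1..i}. (?zz (i - j) * ?zz j) ^ card {S \<in> Dd \<pi> i. g S = j}) =
       (?zz i * ?zz 0) ^ card {S \<in> Dd \<pi> i. g S = 0} * (\<Prod>j\<in>{1..i}. (?zz (i - j) * ?zz j) ^ card {S \<in> Dd \<pi> i. g S = j})"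
      by (simp add: prod.insert)
    also have "(?zz i * ?zz 0) ^ card {S \<in> Dd \<pi> i. g S = 0} = z i ^ (a_cnt i \<pi> - size (lam r \<pi> g i))"
      using i by (simp add: card_zero_Dd card_Dd lam_def)
    also have "(\<Prod>j\<in>{1..i}. (?zz (i - j) * ?zz j) ^ card {S \<in> Dd \<pi> i. g S = j}) =
        (\<Prod>j\<in>{1..i}. (?zz j * ?zz (i - j)) ^ count (lam r \<pi> g i) j)"
    proof (intro prod.cong refl)
      fix j assume j: "j \<in> {1..i}"
      have "count (lam r \<pi> g i) j = card {S \<in> Dd \<pi> i. g S = j}"
        using i j by (simp add: lam_def count_image_mset_eq_card_vimage[OF finite_Dd])
      then show "(?zz (i - j) * ?zz j) ^ card {S \<in> Dd \<pi> i. g S = j} = (?zz j * ?zz (i - j)) ^ count (lam r \<pi> g i) j"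
        by (simp add: mult.commute)
    qed
    finally show "(\<Prod>S\<in>Dd \<pi> i. ?zz (i - g S) * ?zz (g S)) = z i ^ (a_cnt i \<pi> - size (lam r \<pi> g i)) *
      (\<Prod>j\<in>{1..i}. (?zz j * ?zz (i - j)) ^ count (lam r \<pi> g i) j)" .
  qed
  finally show ?thesis unfolding hw_def termT_def tyf_def by simp
qed

end



definition coefT :: "nat \<Rightarrow> (nat \<Rightarrow> real) \<Rightarrow> nat \<times> (nat \<Rightarrow> nat multiset) \<Rightarrow> real" where
  "coefT r z T = (z(0:=1)) (fst T) * (\<Prod>i\<in>{1..r}. \<Prod>j\<in>{1..i}.
        ((z(0:=1)) j * (z(0:=1)) (i - j)) ^ count (snd T i) j / fact (count (snd T i) j))"

context
  fixes r m :: nat and \<pi> :: "nat set multiset"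
  assumes pi: "\<pi> \<in> msp (rep_mset r m)"
begin

lemma fibre_bij:
  assumes T: "(c, l) \<in> scenarios r"
  shows "bij_betw (\<lambda>g. \<lambda>i\<in>{1..r}. restrict g (Dd \<pi> i)) {g \<in> G r \<pi>. tyf r \<pi> g = (c, l)}
           (PiE {1..r} (\<lambda>i. H (Dd \<pi> i) (l i)))"
proof -
  have l1: "set_mset (l i) \<subseteq> {1..i}" and l2: "i \<notin> {1..r} \<Longrightarrow> l i = {#}"
    and l3: "c + (\<Sum>i=1..r. sum_mset (l i)) = r" for i
    using T unfolding scenarios_def by auto
  let ?F = "{g \<in> G r \<pi>. tyf r \<pi> g = (c, l)}"
  let ?phi = "\<lambda>g. \<lambda>i\<in>{1..r}. restrict g (Dd \<pi> i)"
  have inDd: "S \<in> Dd \<pi> (count \<pi> S)" if "S \<in># \<pi>" for S using that unfolding Dd_def by auto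
  have lamF: "filter_mset (\<lambda>j. j \<noteq> 0) (image_mset g (mset_set (Dd \<pi> i))) = l i"
    if "g \<in> ?F" "i \<in> {1..r}" for g i
  proof -
    have "lam r \<pi> g = l" using that(1) unfolding tyf_def by auto
    then have "lam r \<pi> g i = l i" by simp
    then show ?thesis unfolding lam_def if_P[OF that(2)] .
  qed
  show ?thesis
  proof (rule bij_betw_imageI)
    show "inj_on ?phi ?F"
    proof (rule inj_onI)
      fix g1 g2 assume g1: "g1 \<in> ?F" and g2: "g2 \<in> ?F" and e: "?phi g1 = ?phi g2"
      show "g1 = g2"
      proof
        fix S show "g1 S = g2 S"
        proof (cases "S \<in># \<pi>")
          case True
          have "?phi g1 (count \<pi> S) S = ?phi g2 (count \<pi> S) S" using e by simp
          then show ?thesis using True cnt_range[OF pi True] inDd[OF True] by simp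
        next
          case False
          then show ?thesis using g1 g2 unfolding G_def by (auto simp: PiE_iff extensional_def)
        qed
      qed
    qed
    show "?phi ` ?F = PiE {1..r} (\<lambda>i. H (Dd \<pi> i) (l i))"
    proof
      show "?phi ` ?F \<subseteq> PiE {1..r} (\<lambda>i. H (Dd \<pi> i) (l i))"
      proof
        fix h assume "h \<in> ?phi ` ?F"
        then obtain g where g: "g \<in> ?F" and h: "h = ?phi g" by blast
        show "h \<in> PiE {1..r} (\<lambda>i. H (Dd \<pi> i) (l i))"
        proof (rule PiE_I)
          fix i assume i: "i \<in> {1..r}"
          have im: "image_mset (restrict g (Dd \<pi> i)) (mset_set (Dd \<pi> i)) = image_mset g (mset_set (Dd \<pi> i))"
            by (rule image_mset_cong) (simp add: finite_Dd)
          have "restrict g (Dd \<pi> i) \<in> PiE (Dd \<pi> i) (\<lambda>_. insert 0 (set_mset (l i)))"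
          proof (rule PiE_I)
            fix S assume S: "S \<in> Dd \<pi> i"
            show "restrict g (Dd \<pi> i) S \<in> insert 0 (set_mset (l i))"
            proof (cases "g S = 0")
              case False
              then have "g S \<in># filter_mset (\<lambda>j. j \<noteq> 0) (image_mset g (mset_set (Dd \<pi> i)))"
                using S by (simp add: finite_Dd)
              then have "g S \<in># l i" unfolding lamF[OF g i] .
              then show ?thesis using S by simp
            qed (use S in simp)
          qed simp
          then show "h i \<in> H (Dd \<pi> i) (l i)" unfolding H_def h using i im lamF[OF g i] by simp
        qed (auto simp: h)
      qed
    next
      show "PiE {1..r} (\<lambda>i. H (Dd \<pi> i) (l i)) \<subseteq> ?phi ` ?F"
      proof
        fix h assume h: "h \<in> PiE {1..r} (\<lambda>i. H (Dd \<pi> i) (l i))"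
        define g where "g S = (if S \<in># \<pi> then h (count \<pi> S) S else undefined)" for S
        have hH: "h i \<in> H (Dd \<pi> i) (l i)" if "i \<in> {1..r}" for i using h that by auto
        have imi: "image_mset g (mset_set (Dd \<pi> i)) = image_mset (h i) (mset_set (Dd \<pi> i))" for i
          by (rule image_mset_cong) (auto simp: finite_Dd g_def Dd_def)
        have lam_g: "lam r \<pi> g = l"
        proof
          fix i show "lam r \<pi> g i = l i"
            using hH[of i] l2[of i] unfolding lam_def imi H_def by auto
        qed
        have sg: "(\<Sum>S\<in>set_mset \<pi>. g S) = (\<Sum>i=1..r. sum_mset (l i))"
          unfolding sum_split[OF pi]
        proof (intro sum.cong refl)
          fix i assume i: "i \<in> {1..r}"
          have "lam r \<pi> g i = l i" using lam_g by simp
          then have e: "filter_mset (\<lambda>j. j \<noteq> 0) (image_mset g (mset_set (Dd \<pi> i))) = l i"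
            unfolding lam_def if_P[OF i] .
          show "(\<Sum>S\<in>Dd \<pi> i. g S) = sum_mset (l i)"
            by (simp only: sum_as_lam[OF finite_Dd] e)
        qed
        have gP: "g \<in> PiE (set_mset \<pi>) (\<lambda>S. {0..count \<pi> S})"
        proof (rule PiE_I)
          fix S assume S: "S \<in> set_mset \<pi>"
          have "h (count \<pi> S) S \<in> insert 0 (set_mset (l (count \<pi> S)))"
            using hH[OF cnt_range[OF pi S]] inDd[OF S] unfolding H_def by auto
          then show "g S \<in> {0..count \<pi> S}" using l1[of "count \<pi> S"] S unfolding g_def by auto
        qed (simp add: g_def)
        have "g \<in> ?F" unfolding G_def tyf_def using gP sg l3 lam_g by auto
        moreover have "h = ?phi g"
        proof
          fix i show "h i = ?phi g i"
          proof (cases "i \<in> {1..r}")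
            case True
            show ?thesis
            proof
              fix S show "h i S = ?phi g i S"
                using hH[OF True] True unfolding H_def by (auto simp: g_def Dd_def PiE_iff extensional_def)
            qed
          qed (use h in auto)
        qed
        ultimately show "h \<in> ?phi ` ?F" by blast
      qed
    qed
  qed
qed

lemma card_fibre:
  assumes T: "(c, l) \<in> scenarios r"
  shows "real (card {g \<in> G r \<pi>. tyf r \<pi> g = (c, l)}) * (\<Prod>i\<in>{1..r}. \<Prod>j\<in>{1..i}. fact (count (l i) j))
     = (\<Prod>i\<in>{1..r}. ff (a_cnt i \<pi>) (size (l i)))"
proof -
  have l1: "set_mset (l i) \<subseteq> {1..i}" for i using T unfolding scenarios_def by auto
  have "card {g \<in> G r \<pi>. tyf r \<pi> g = (c, l)} = card (PiE {1..r} (\<lambda>i. H (Dd \<pi> i) (l i)))"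
    by (rule bij_betw_same_card[OF fibre_bij[OF T]])
  also have "\<dots> = (\<Prod>i\<in>{1..r}. card (H (Dd \<pi> i) (l i)))" by (simp add: card_PiE)
  finally have "real (card {g \<in> G r \<pi>. tyf r \<pi> g = (c, l)}) * (\<Prod>i\<in>{1..r}. \<Prod>j\<in>{1..i}. fact (count (l i) j))
     = (\<Prod>i\<in>{1..r}. real (card (H (Dd \<pi> i) (l i))) * (\<Prod>j\<in>{1..i}. fact (count (l i) j)))"
    by (simp add: prod.distrib)
  also have "\<dots> = (\<Prod>i\<in>{1..r}. ff (a_cnt i \<pi>) (size (l i)))"
  proof (intro prod.cong refl)
    fix i assume "i \<in> {1..r}"
    have "real (card (H (Dd \<pi> i) (l i))) * (\<Prod>j\<in>{1..i}. fact (count (l i) j)) = ff (card (Dd \<pi> i)) (size (l i))"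
      by (rule count_H[OF finite_Dd finite_atLeastAtMost _ l1]) auto
    then show "real (card (H (Dd \<pi> i) (l i))) * (\<Prod>j\<in>{1..i}. fact (count (l i) j)) = ff (a_cnt i \<pi>) (size (l i))"
      by (simp add: card_Dd)
  qed
  finally show ?thesis .
qed

lemma per_pi:
  "(\<Sum>g\<in>G r \<pi>. hw r z \<pi> g) = (\<Sum>T\<in>scenarios r. coefT r z T *
     ((\<Prod>i\<in>{1..r}. ff (a_cnt i \<pi>) (size (snd T i))) * (\<Prod>k\<in>{1..r}. z k ^ (a_cnt k \<pi> - size (snd T k)))))"
proof -
  have "(\<Sum>g\<in>G r \<pi>. hw r z \<pi> g) = (\<Sum>T\<in>scenarios r. \<Sum>g\<in>{g \<in> G r \<pi>. tyf r \<pi> g = T}. hw r z \<pi> g)"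
    by (rule sum.group[symmetric, OF finite_G finite_scenarios]) (use tyf_scen[OF pi] in auto)
  also have "\<dots> = (\<Sum>T\<in>scenarios r. real (card {g \<in> G r \<pi>. tyf r \<pi> g = T}) * termT r z \<pi> T)"
    by (intro sum.cong refl) (simp add: hw_tyf[OF pi])
  also have "\<dots> = (\<Sum>T\<in>scenarios r. coefT r z T *
     ((\<Prod>i\<in>{1..r}. ff (a_cnt i \<pi>) (size (snd T i))) * (\<Prod>k\<in>{1..r}. z k ^ (a_cnt k \<pi> - size (snd T k)))))"
  proof (intro sum.cong refl)
    fix T assume T: "T \<in> scenarios r"
    obtain c l where Tcl: "T = (c, l)" by (cases T)
    let ?zz = "z(0:=1)"
    define K where "K = real (card {g \<in> G r \<pi>. tyf r \<pi> g = T})"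
    define F where "F = (\<Prod>i\<in>{1..r}. \<Prod>j\<in>{1..i}. fact (count (l i) j) :: real)"
    define Q where "Q = (\<Prod>i\<in>{1..r}. \<Prod>j\<in>{1..i}. (?zz j * ?zz (i - j)) ^ count (l i) j)"
    define Z where "Z = (\<Prod>i\<in>{1..r}. z i ^ (a_cnt i \<pi> - size (l i)))"
    have KF: "K * F = (\<Prod>i\<in>{1..r}. ff (a_cnt i \<pi>) (size (l i)))"
      unfolding K_def F_def Tcl by (rule card_fibre) (use T Tcl in simp)
    have F0: "F \<noteq> 0" unfolding F_def by (simp add: prod_zero_iff)
    have tT: "termT r z \<pi> T = ?zz c * Z * Q"
      unfolding termT_def Z_def Q_def Tcl by (simp add: prod.distrib mult_ac)
    have cT: "coefT r z T = ?zz c * Q / F"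
      unfolding coefT_def Q_def F_def Tcl by (simp add: prod_dividef)
    show "real (card {g \<in> G r \<pi>. tyf r \<pi> g = T}) * termT r z \<pi> T = coefT r z T *
     ((\<Prod>i\<in>{1..r}. ff (a_cnt i \<pi>) (size (snd T i))) * (\<Prod>k\<in>{1..r}. z k ^ (a_cnt k \<pi> - size (snd T k))))"
      unfolding tT cT K_def[symmetric] using KF F0 Z_def Tcl by (simp add: field_simps)
  qed
  finally show ?thesis .
qed

end

theorem mainTheorem2:
  fixes r n :: nat
  assumes "r \<ge> 1" and "n \<ge> 1"
  shows "(\<forall>z. P r n z = Dop r (P r (n - 1)) z)
         \<and> real (card (msp (rep_mset r n))) = P r n (\<lambda>_. 1)"
proof
  obtain m where n: "n = Suc m" using assms(2) by (cases n) auto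
  show "\<forall>z. P r n z = Dop r (P r (n - 1)) z"
  proof
    fix z :: "nat \<Rightarrow> real"
    have "P r n z = (\<Sum>\<pi>'\<in>msp (rep_mset r (Suc m)). \<Prod>i\<in>{1..r}. z i ^ a_cnt i \<pi>')"
      unfolding P_def n ..
    also have "\<dots> = (\<Sum>\<pi>\<in>msp (rep_mset r m). \<Sum>\<mu>\<in>Mu r \<pi>. \<Prod>i\<in>{1..r}. z i ^ a_cnt i (Phi (Suc m) r \<pi> \<mu>))"
      by (rule sum_msp_Suc)
    also have "\<dots> = (\<Sum>\<pi>\<in>msp (rep_mset r m). \<Sum>T\<in>scenarios r. coefT r z T *
     ((\<Prod>i\<in>{1..r}. ff (a_cnt i \<pi>) (size (snd T i))) * (\<Prod>k\<in>{1..r}. z k ^ (a_cnt k \<pi> - size (snd T k)))))"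
    proof (intro sum.cong refl)
      fix \<pi> assume h: "\<pi> \<in> msp (rep_mset r m)"
      show "(\<Sum>\<mu>\<in>Mu r \<pi>. \<Prod>i\<in>{1..r}. z i ^ a_cnt i (Phi (Suc m) r \<pi> \<mu>)) = (\<Sum>T\<in>scenarios r. coefT r z T *
     ((\<Prod>i\<in>{1..r}. ff (a_cnt i \<pi>) (size (snd T i))) * (\<Prod>k\<in>{1..r}. z k ^ (a_cnt k \<pi> - size (snd T k)))))"
        using sum_Mu_G[OF h] per_pi[OF h] by (rule trans)
    qed
    also have "\<dots> = (\<Sum>T\<in>scenarios r. coefT r z T * Dall r (snd T) (P r m) z)"
      unfolding Dall_P sum_distrib_left by (rule sum.swap)
    also have "\<dots> = Dop r (P r (n - 1)) z"
      unfolding Dop_def n by (intro sum.cong refl) (simp add: PT_def coefT_def Let_def)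
    finally show "P r n z = Dop r (P r (n - 1)) z" .
  qed
  show "real (card (msp (rep_mset r n))) = P r n (\<lambda>_. 1)"
    unfolding P_def by simp
qed

end
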